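(* There exist a uniquely $4$-colourable plane triangulation $G'$, a set $\mathcal F$ of $24$ faces of $G'$, and a bijection $F\mapsto\phi_F$ between $\mathcal F$ and the $24$ proper colourings $V(G')\to\{1,2,3,4\}$ of $G'$, such that for every $F\in\mathcal F$, $\phi_F(V(F))=\{1,2,3\}$, where $V(F)$ is the set of vertices incident to $F$.
   Context: A graph is uniquely $4$-colourable if there is a unique partition of its vertex set into $4$ independent sets; such a graph has exactly $24$ proper colourings with colour set $\{1,2,3,4\}$. *)

theory Defs
  imports Main "HOL-Library.FuncSet" "HOL-Library.Disjoint_Sets"
begin

text \<open>A plane triangulation is described combinatorially as a triangulated 2-sphere:
  a finite set V of vertices and a set T of faces (each a 3-element set of vertices).\<close>

definition tri_edges :: "'a set set \<Rightarrow> 'a set set" where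
  "tri_edges T = {e. card e = 2 \<and> (\<exists>t\<in>T. e \<subseteq> t)}"

definition vertex_link :: "'a set set \<Rightarrow> 'a \<Rightarrow> 'a set set" where
  "vertex_link T v = {t - {v} | t. t \<in> T \<and> v \<in> t}"

definition edge_rel :: "'a set set \<Rightarrow> ('a \<times> 'a) set" where
  "edge_rel E = {(x, y). {x, y} \<in> E}"

definition plane_triangulation :: "'a set \<Rightarrow> 'a set set \<Rightarrow> bool" where
  "plane_triangulation V T \<longleftrightarrow>
     finite V \<and> V \<noteq> {} \<and>
     (\<forall>t\<in>T. t \<subseteq> V \<and> card t = 3) \<and>
     (\<forall>v\<in>V. \<exists>t\<in>T. v \<in> t) \<and>
     \<comment> \<open>every edge lies in exactly two faces\<close>
     (\<forall>e\<in>tri_edges T. card {t\<in>T. e \<subseteq> t} = 2) \<and>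
     \<comment> \<open>the link of every vertex is a single cycle (it is 2-regular by the previous clause)\<close>
     (\<forall>v\<in>V. \<forall>x\<in>\<Union>(vertex_link T v). \<forall>y\<in>\<Union>(vertex_link T v).
        (x, y) \<in> (edge_rel (vertex_link T v))\<^sup>*) \<and>
     \<comment> \<open>connected\<close>
     (\<forall>x\<in>V. \<forall>y\<in>V. (x, y) \<in> (edge_rel (tri_edges T))\<^sup>*) \<and>
     \<comment> \<open>Euler characteristic 2 (sphere)\<close>
     int (card V) - int (card (tri_edges T)) + int (card T) = 2"

definition independent_set :: "'a set set \<Rightarrow> 'a set \<Rightarrow> bool" where
  "independent_set E S \<longleftrightarrow> (\<forall>x\<in>S. \<forall>y\<in>S. {x, y} \<notin> E)"

definition proper_colourings :: "'a set \<Rightarrow> 'a set set \<Rightarrow> nat \<Rightarrow> ('a \<Rightarrow> nat) set" where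
  "proper_colourings V E k =
     {\<phi> \<in> V \<rightarrow>\<^sub>E {1..k}. \<forall>x\<in>V. \<forall>y\<in>V. {x, y} \<in> E \<longrightarrow> \<phi> x \<noteq> \<phi> y}"

definition uniquely_colourable :: "'a set \<Rightarrow> 'a set set \<Rightarrow> nat \<Rightarrow> bool" where
  "uniquely_colourable V E k \<longleftrightarrow>
     (\<exists>!P. partition_on V P \<and> card P = k \<and> (\<forall>S\<in>P. independent_set E S))"

end

theory Submission
  imports Defs
begin

definition V0 :: "nat set" where "V0 = {0,1,2,3,4,5,6,7,8,9,10,11,12,13,14}"
definition T0 :: "nat set set" where "T0 = {{0,2,5},{0,1,6},{0,1,7},{0,2,7},{1,2,7},{2,3,8},{2,5,8},{3,5,8},{2,3,9},{2,4,9},{3,4,9},{1,3,10},{1,4,10},{3,4,10},{1,2,11},{1,4,11},{2,4,11},{1,3,12},{1,6,12},{3,6,12},{0,3,13},{0,6,13},{3,6,13},{0,3,14},{0,5,14},{3,5,14}}"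
definition E0 :: "nat set set" where "E0 = {{0,1},{0,2},{0,3},{0,5},{0,6},{0,7},{0,13},{0,14},{1,2},{1,3},{1,4},{1,6},{1,7},{1,10},{1,11},{1,12},{2,3},{2,4},{2,5},{2,7},{2,8},{2,9},{2,11},{3,4},{3,5},{3,6},{3,8},{3,9},{3,10},{3,12},{3,13},{3,14},{4,9},{4,10},{4,11},{5,8},{5,14},{6,12},{6,13}}"
definition LK :: "nat list list" where "LK = [[2,5,14,3,13,6,1,7],[0,6,12,3,10,4,11,2,7],[0,5,8,3,9,4,11,1,7],[2,8,5,14,0,13,6,12,1,10,4,9],[2,9,3,10,1,11],[0,2,8,3,14],[0,1,12,3,13],[0,1,2],[2,3,5],[2,3,4],[1,3,4],[1,2,4],[1,3,6],[0,3,6],[0,3,5]]"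
definition walk :: "nat list" where "walk = [0,1,2,3,4,9,4,10,4,11,4,3,5,8,5,14,5,3,6,12,6,13,6,3,2,7,2,1,0]"
definition LL :: "(nat set \<times> nat list) list" where "LL = [({1,2,7},[4,1,2,3]),({2,3,9},[4,1,3,2]),({1,3,10},[4,2,1,3]),({1,2,11},[4,2,3,1]),({3,6,13},[4,3,1,2]),({3,5,14},[4,3,2,1]),({0,2,7},[1,4,2,3]),({2,3,8},[1,4,3,2]),({3,4,10},[2,4,1,3]),({2,4,11},[2,4,3,1]),({3,6,12},[3,4,1,2]),({0,3,14},[3,4,2,1]),({0,1,7},[1,2,4,3]),({3,5,8},[1,3,4,2]),({3,4,9},[2,1,4,3]),({1,4,11},[2,3,4,1]),({1,3,12},[3,1,4,2]),({0,3,13},[3,2,4,1]),({0,2,5},[1,2,3,4]),({0,1,6},[1,3,2,4]),({2,5,8},[2,1,3,4]),({2,4,9},[2,3,1,4]),({1,4,10},[3,1,2,4]),({1,6,12},[3,2,1,4])]"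
definition P24 :: "nat list set" where "P24 = {[4,1,2,3],[4,1,3,2],[4,2,1,3],[4,2,3,1],[4,3,1,2],[4,3,2,1],[1,4,2,3],[1,4,3,2],[2,4,1,3],[2,4,3,1],[3,4,1,2],[3,4,2,1],[1,2,4,3],[1,3,4,2],[2,1,4,3],[2,3,4,1],[3,1,4,2],[3,2,4,1],[1,2,3,4],[1,3,2,4],[2,1,3,4],[2,3,1,4],[3,1,2,4],[3,2,1,4]}"
definition ext :: "nat list \<Rightarrow> nat \<Rightarrow> nat" where
  "ext p = (\<lambda>v. if v \<in> V0 then p ! (v mod 4) else undefined)"
definition blk :: "nat \<Rightarrow> nat set" where "blk i = {v \<in> V0. v mod 4 = i}"

lemma seq_gen: "((A::'a set) = B) = (A \<subseteq> B \<and> B \<subseteq> A)" by auto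

lemma filter_insert: "{x \<in> insert a A. P x} = (if P a then insert a {x \<in> A. P x} else {x \<in> A. P x})"
  by auto
definition filt :: "('a \<Rightarrow> bool) \<Rightarrow> 'a set \<Rightarrow> 'a set" where "filt P A = {x \<in> A. P x}"
lemma filter_insT: "P a \<Longrightarrow> filt P (insert a A) = insert a (filt P A)" unfolding filt_def by auto
lemma filter_insF: "\<not> P a \<Longrightarrow> filt P (insert a A) = filt P A" unfolding filt_def by auto
lemma filter_emp: "filt P {} = {}" unfolding filt_def by auto
lemma to_filter: "{x \<in> A. P x} = filt P A" unfolding filt_def by auto
lemma filter_empty: "{x \<in> {}. P x} = {}" by auto

lemma tri_edges_insert: "tri_edges (insert t T) = {e. card e = 2 \<and> e \<subseteq> t} \<union> tri_edges T"
  unfolding tri_edges_def by auto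
lemma tri_edges_empty: "tri_edges {} = {}" unfolding tri_edges_def by auto
lemma card2_sub3:
  assumes "a \<noteq> b" "a \<noteq> c" "b \<noteq> c"
  shows "{e. card e = 2 \<and> e \<subseteq> {a,b,c}} = {{a,b},{a,c},{b,c}}"
proof -
  have "e = {a,b} \<or> e = {a,c} \<or> e = {b,c}" if "card e = 2" "e \<subseteq> {a,b,c}" for e
  proof -
    from that(1) obtain x y where "e = {x,y}" "x \<noteq> y" by (meson card_2_iff)
    then show ?thesis using that(2) by auto
  qed
  then show ?thesis using assms by (auto simp: card_insert_if)
qed

lemma TE: "tri_edges T0 = E0"
  unfolding T0_def E0_def
  apply (simp only: tri_edges_insert tri_edges_empty)
  apply (subst card2_sub3, simp, simp, simp)+
  apply (simp add: seq_gen)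
  done

lemma E0_facts: "\<forall>e\<in>E0. e \<subseteq> V0 \<and> card e = 2 \<and> (\<forall>x\<in>e. \<forall>y\<in>e. x mod 4 = y mod 4 \<longrightarrow> x = y)"
  unfolding E0_def V0_def by simp

lemma EV: assumes "{x,y} \<in> E0" shows "x \<in> V0 \<and> y \<in> V0"
  using bspec[OF E0_facts assms] by blast

lemma Ecol: assumes a: "{x,y} \<in> E0" shows "x mod 4 \<noteq> y mod 4"
proof
  assume b: "x mod 4 = y mod 4"
  have h: "card {x,y} = 2" "\<forall>u\<in>{x,y}. \<forall>w\<in>{x,y}. u mod 4 = w mod 4 \<longrightarrow> u = w"
    using bspec[OF E0_facts a] by blast+
  then have "x = y" using b by blast
  then show False using h(1) by simp
qed

fun chain :: "'a set set \<Rightarrow> 'a list \<Rightarrow> bool" where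
  "chain L (x # y # xs) = ({x,y} \<in> L \<and> chain L (y # xs))"
| "chain L _ = True"

lemma chain_reach:
  "chain L xs \<Longrightarrow> x \<in> set xs \<Longrightarrow> (hd xs, x) \<in> (edge_rel L)\<^sup>* \<and> (x, hd xs) \<in> (edge_rel L)\<^sup>*"
proof (induction L xs rule: chain.induct)
  case (1 L a b xs)
  have "{a,b} \<in> L" using 1(2) by simp
  then have e1: "(a, b) \<in> edge_rel L" and e2: "(b, a) \<in> edge_rel L"
    by (auto simp: edge_rel_def insert_commute)
  show ?case
  proof (cases "x = a")
    case True then show ?thesis by simp
  next
    case False
    then have "x \<in> set (b # xs)" using 1(3) by simp
    moreover have "chain L (b # xs)" using 1(2) by simp
    ultimately have "(b, x) \<in> (edge_rel L)\<^sup>* \<and> (x, b) \<in> (edge_rel L)\<^sup>*" using 1(1) by simp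
    then have "(a, x) \<in> (edge_rel L)\<^sup>*" "(x, a) \<in> (edge_rel L)\<^sup>*"
      using e1 e2 by (meson converse_rtrancl_into_rtrancl rtrancl_into_rtrancl)+
    then show ?thesis by simp
  qed
qed simp_all

lemma chain_conn:
  assumes "chain L xs" "x \<in> set xs" "y \<in> set xs"
  shows "(x, y) \<in> (edge_rel L)\<^sup>*"
  using chain_reach[OF assms(1,2)] chain_reach[OF assms(1,3)]
  by (meson rtrancl_trans)

lemma vlink: "vertex_link T v = (\<lambda>t. t - {v}) ` {t \<in> T. v \<in> t}"
  unfolding vertex_link_def by auto

lemma links: "\<forall>v\<in>V0. \<Union>(vertex_link T0 v) \<subseteq> set (LK ! v) \<and> chain (vertex_link T0 v) (LK ! v)"
  unfolding V0_def vlink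
  apply (simp only: ball_simps)
  apply (simp only: to_filter)
  apply (simp add: T0_def filter_insT filter_insF filter_emp insert_Diff_if)
  apply (simp add: LK_def doubleton_eq_iff)
  done

lemma two: "\<forall>e\<in>E0. card {t\<in>T0. e \<subseteq> t} = 2"
  unfolding E0_def
  apply (simp only: ball_simps)
  apply (simp only: to_filter)
  apply (simp add: T0_def filter_insT filter_insF filter_emp)
  apply (simp add: seq_gen)
  done

lemma walk_ok: "chain E0 walk \<and> V0 \<subseteq> set walk"
  unfolding walk_def V0_def by (simp add: E0_def doubleton_eq_iff)

lemma plane: "plane_triangulation V0 T0"
proof -
  have l2: "\<forall>v\<in>V0. \<forall>x\<in>\<Union>(vertex_link T0 v). \<forall>y\<in>\<Union>(vertex_link T0 v).
        (x, y) \<in> (edge_rel (vertex_link T0 v))\<^sup>*"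
  proof (intro ballI)
    fix v x y assume v: "v \<in> V0" and x: "x \<in> \<Union>(vertex_link T0 v)" and y: "y \<in> \<Union>(vertex_link T0 v)"
    have h: "\<Union>(vertex_link T0 v) \<subseteq> set (LK ! v) \<and> chain (vertex_link T0 v) (LK ! v)"
      using links v by (rule bspec)
    have "x \<in> set (LK ! v)" "y \<in> set (LK ! v)" using h x y by (auto dest: subsetD)
    then show "(x, y) \<in> (edge_rel (vertex_link T0 v))\<^sup>*"
      using chain_conn h by metis
  qed
  have conn: "\<forall>x\<in>V0. \<forall>y\<in>V0. (x, y) \<in> (edge_rel E0)\<^sup>*"
  proof (intro ballI)
    fix x y assume "x \<in> V0" "y \<in> V0"
    then have "x \<in> set walk" "y \<in> set walk" using walk_ok by (auto dest: subsetD)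
    then show "(x, y) \<in> (edge_rel E0)\<^sup>*" using chain_conn walk_ok by metis
  qed
  have faces: "\<forall>t\<in>T0. t \<subseteq> V0 \<and> card t = 3"
    unfolding T0_def V0_def by simp
  have cov: "\<forall>v\<in>V0. \<exists>t\<in>T0. v \<in> t"
    unfolding T0_def V0_def by simp
  have cE: "card E0 = 39" unfolding E0_def by (simp add: seq_gen)
  have cT: "card T0 = 26" unfolding T0_def by (simp add: seq_gen)
  have cV: "card V0 = 15" "finite V0" "V0 \<noteq> {}" unfolding V0_def by simp_all
  have eu: "int (card V0) - int (card E0) + int (card T0) = 2" using cE cT cV by simp
  show ?thesis unfolding plane_triangulation_def TE
    apply (intro conjI)
    apply (rule cV(2))
    apply (rule cV(3))
    apply (rule faces)
    apply (rule cov)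
    apply (rule two)
    apply (rule l2)
    apply (rule conn)
    apply (rule eu)
    done
qed

lemma forced:
  fixes f :: "nat \<Rightarrow> 'b"
  assumes adj: "\<And>x y. {x,y} \<in> E0 \<Longrightarrow> f x \<noteq> f y"
    and rng: "\<And>v. v \<in> V0 \<Longrightarrow> f v \<in> {f 0, f 1, f 2, f 3}"
  shows "\<forall>v\<in>V0. f v = f (v mod 4)"
proof -
  have d01: "f 0 \<noteq> f 1" by (rule adj) (simp add: E0_def)
  have d02: "f 0 \<noteq> f 2" by (rule adj) (simp add: E0_def doubleton_eq_iff)
  have d03: "f 0 \<noteq> f 3" by (rule adj) (simp add: E0_def doubleton_eq_iff)
  have d12: "f 1 \<noteq> f 2" by (rule adj) (simp add: E0_def doubleton_eq_iff)
  have d13: "f 1 \<noteq> f 3" by (rule adj) (simp add: E0_def doubleton_eq_iff)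
  have d23: "f 2 \<noteq> f 3" by (rule adj) (simp add: E0_def doubleton_eq_iff)
  have h4: "f 4 = f 0"
  proof -
    have "f 4 \<noteq> f 1" "f 4 \<noteq> f 2" "f 4 \<noteq> f 3"
      by (rule adj, simp add: E0_def doubleton_eq_iff)+
    moreover have "f 4 \<in> {f 0, f 1, f 2, f 3}" by (rule rng) (simp add: V0_def)
    ultimately show ?thesis using d01 d02 d03 d12 d13 d23  by auto
  qed
  have h5: "f 5 = f 1"
  proof -
    have "f 5 \<noteq> f 0" "f 5 \<noteq> f 2" "f 5 \<noteq> f 3"
      by (rule adj, simp add: E0_def doubleton_eq_iff)+
    moreover have "f 5 \<in> {f 0, f 1, f 2, f 3}" by (rule rng) (simp add: V0_def)
    ultimately show ?thesis using d01 d02 d03 d12 d13 d23  by auto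
  qed
  have h6: "f 6 = f 2"
  proof -
    have "f 6 \<noteq> f 0" "f 6 \<noteq> f 1" "f 6 \<noteq> f 3"
      by (rule adj, simp add: E0_def doubleton_eq_iff)+
    moreover have "f 6 \<in> {f 0, f 1, f 2, f 3}" by (rule rng) (simp add: V0_def)
    ultimately show ?thesis using d01 d02 d03 d12 d13 d23  by auto
  qed
  have h7: "f 7 = f 3"
  proof -
    have "f 7 \<noteq> f 0" "f 7 \<noteq> f 1" "f 7 \<noteq> f 2"
      by (rule adj, simp add: E0_def doubleton_eq_iff)+
    moreover have "f 7 \<in> {f 0, f 1, f 2, f 3}" by (rule rng) (simp add: V0_def)
    ultimately show ?thesis using d01 d02 d03 d12 d13 d23  by auto
  qed
  have h8: "f 8 = f 0"
  proof -
    have "f 8 \<noteq> f 2" "f 8 \<noteq> f 3" "f 8 \<noteq> f 5"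
      by (rule adj, simp add: E0_def doubleton_eq_iff)+
    moreover have "f 8 \<in> {f 0, f 1, f 2, f 3}" by (rule rng) (simp add: V0_def)
    ultimately show ?thesis using d01 d02 d03 d12 d13 d23 h5 by auto
  qed
  have h9: "f 9 = f 1"
  proof -
    have "f 9 \<noteq> f 2" "f 9 \<noteq> f 3" "f 9 \<noteq> f 4"
      by (rule adj, simp add: E0_def doubleton_eq_iff)+
    moreover have "f 9 \<in> {f 0, f 1, f 2, f 3}" by (rule rng) (simp add: V0_def)
    ultimately show ?thesis using d01 d02 d03 d12 d13 d23 h4 by auto
  qed
  have h10: "f 10 = f 2"
  proof -
    have "f 10 \<noteq> f 1" "f 10 \<noteq> f 3" "f 10 \<noteq> f 4"
      by (rule adj, simp add: E0_def doubleton_eq_iff)+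
    moreover have "f 10 \<in> {f 0, f 1, f 2, f 3}" by (rule rng) (simp add: V0_def)
    ultimately show ?thesis using d01 d02 d03 d12 d13 d23 h4 by auto
  qed
  have h11: "f 11 = f 3"
  proof -
    have "f 11 \<noteq> f 1" "f 11 \<noteq> f 2" "f 11 \<noteq> f 4"
      by (rule adj, simp add: E0_def doubleton_eq_iff)+
    moreover have "f 11 \<in> {f 0, f 1, f 2, f 3}" by (rule rng) (simp add: V0_def)
    ultimately show ?thesis using d01 d02 d03 d12 d13 d23 h4 by auto
  qed
  have h12: "f 12 = f 0"
  proof -
    have "f 12 \<noteq> f 1" "f 12 \<noteq> f 3" "f 12 \<noteq> f 6"
      by (rule adj, simp add: E0_def doubleton_eq_iff)+
    moreover have "f 12 \<in> {f 0, f 1, f 2, f 3}" by (rule rng) (simp add: V0_def)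
    ultimately show ?thesis using d01 d02 d03 d12 d13 d23 h6 by auto
  qed
  have h13: "f 13 = f 1"
  proof -
    have "f 13 \<noteq> f 0" "f 13 \<noteq> f 3" "f 13 \<noteq> f 6"
      by (rule adj, simp add: E0_def doubleton_eq_iff)+
    moreover have "f 13 \<in> {f 0, f 1, f 2, f 3}" by (rule rng) (simp add: V0_def)
    ultimately show ?thesis using d01 d02 d03 d12 d13 d23 h6 by auto
  qed
  have h14: "f 14 = f 2"
  proof -
    have "f 14 \<noteq> f 0" "f 14 \<noteq> f 3" "f 14 \<noteq> f 5"
      by (rule adj, simp add: E0_def doubleton_eq_iff)+
    moreover have "f 14 \<in> {f 0, f 1, f 2, f 3}" by (rule rng) (simp add: V0_def)
    ultimately show ?thesis using d01 d02 d03 d12 d13 d23 h5 by auto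
  qed
  show ?thesis using h4 h5 h6 h7 h8 h9 h10 h11 h12 h13 h14 by (simp add: V0_def)
qed

lemma mod4: "(n::nat) mod 4 = 0 \<or> n mod 4 = 1 \<or> n mod 4 = 2 \<or> n mod 4 = 3"
  by arith

lemma ext_proper:
  assumes "length p = 4" "set p \<subseteq> {1..4}" "distinct p"
  shows "ext p \<in> proper_colourings V0 E0 4"
proof -
  have n: "p ! (v mod 4) \<in> {1..4}" for v
  proof -
    have "p ! (v mod 4) \<in> set p" using assms(1) by (simp add: nth_mem)
    then show ?thesis using assms(2) by blast
  qed
  have "ext p \<in> V0 \<rightarrow>\<^sub>E {1..4}"
    using n by (auto simp: PiE_iff extensional_def ext_def)
  moreover have "ext p x \<noteq> ext p y" if "x \<in> V0" "y \<in> V0" "{x,y} \<in> E0" for x y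
  proof -
    have "x mod 4 \<noteq> y mod 4" using Ecol[OF that(3)] .
    then have "p ! (x mod 4) \<noteq> p ! (y mod 4)"
      using assms(1,3) nth_eq_iff_index_eq[of p "x mod 4" "y mod 4"] by auto
    then show ?thesis using that by (simp add: ext_def)
  qed
  ultimately show ?thesis unfolding proper_colourings_def by blast
qed

lemma perm4:
  assumes "a \<in> {1..4::nat}" "b \<in> {1..4}" "c \<in> {1..4}" "d \<in> {1..4}" "distinct [a,b,c,d]"
  shows "[a,b,c,d] \<in> P24"
proof -
  have "a = 1 \<or> a = 2 \<or> a = 3 \<or> a = 4" "b = 1 \<or> b = 2 \<or> b = 3 \<or> b = 4"
       "c = 1 \<or> c = 2 \<or> c = 3 \<or> c = 4" "d = 1 \<or> d = 2 \<or> d = 3 \<or> d = 4"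
    using assms(1-4) by auto
  then show ?thesis using assms(5) unfolding P24_def
    by (elim disjE) simp_all
qed

lemma col_char: "proper_colourings V0 E0 4 = ext ` P24"
proof
  have "\<forall>p\<in>P24. length p = 4 \<and> set p \<subseteq> {1..4} \<and> distinct p"
    unfolding P24_def by simp
  then show "ext ` P24 \<subseteq> proper_colourings V0 E0 4" using ext_proper by blast
next
  show "proper_colourings V0 E0 4 \<subseteq> ext ` P24"
  proof
    fix \<phi> assume a: "\<phi> \<in> proper_colourings V0 E0 4"
    then have pi: "\<phi> \<in> V0 \<rightarrow>\<^sub>E {1..4}"
      and pr: "\<forall>x\<in>V0. \<forall>y\<in>V0. {x,y} \<in> E0 \<longrightarrow> \<phi> x \<noteq> \<phi> y"
      unfolding proper_colourings_def by blast+
    have adj: "\<phi> x \<noteq> \<phi> y" if "{x,y} \<in> E0" for x y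
      using pr EV[OF that] that by blast
    have r: "\<phi> v \<in> {1..4}" if "v \<in> V0" for v using pi that by auto
    have d01: "\<phi> 0 \<noteq> \<phi> 1" by (rule adj) (simp add: E0_def)
    have d02: "\<phi> 0 \<noteq> \<phi> 2" by (rule adj) (simp add: E0_def doubleton_eq_iff)
    have d03: "\<phi> 0 \<noteq> \<phi> 3" by (rule adj) (simp add: E0_def doubleton_eq_iff)
    have d12: "\<phi> 1 \<noteq> \<phi> 2" by (rule adj) (simp add: E0_def doubleton_eq_iff)
    have d13: "\<phi> 1 \<noteq> \<phi> 3" by (rule adj) (simp add: E0_def doubleton_eq_iff)
    have d23: "\<phi> 2 \<noteq> \<phi> 3" by (rule adj) (simp add: E0_def doubleton_eq_iff)
    have i0: "\<phi> 0 \<in> {1..4}" "\<phi> 1 \<in> {1..4}" "\<phi> 2 \<in> {1..4}" "\<phi> 3 \<in> {1..4}"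
      by (rule r, simp add: V0_def)+
    have s: "{\<phi> 0, \<phi> 1, \<phi> 2, \<phi> 3} = {1..4}"
    proof (rule card_subset_eq)
      show "{\<phi> 0, \<phi> 1, \<phi> 2, \<phi> 3} \<subseteq> {1..4}" using i0 by auto
      show "card {\<phi> 0, \<phi> 1, \<phi> 2, \<phi> 3} = card {1..4::nat}"
        using d01 d02 d03 d12 d13 d23 by simp
    qed simp
    have rng: "\<phi> v \<in> {\<phi> 0, \<phi> 1, \<phi> 2, \<phi> 3}" if "v \<in> V0" for v
      using r[OF that] s by simp
    have f: "\<forall>v\<in>V0. \<phi> v = \<phi> (v mod 4)" using forced[OF adj rng] by blast
    have pP: "[\<phi> 0, \<phi> 1, \<phi> 2, \<phi> 3] \<in> P24"
      using perm4 i0 d01 d02 d03 d12 d13 d23 by simp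
    have "\<phi> = ext [\<phi> 0, \<phi> 1, \<phi> 2, \<phi> 3]"
    proof (rule ext)
      fix v show "\<phi> v = ext [\<phi> 0, \<phi> 1, \<phi> 2, \<phi> 3] v"
      proof (cases "v \<in> V0")
        case True
        then have "\<phi> v = \<phi> (v mod 4)" using f by blast
        moreover have "[\<phi> 0, \<phi> 1, \<phi> 2, \<phi> 3] ! (v mod 4) = \<phi> (v mod 4)"
          using mod4[of v] by (elim disjE) simp_all
        ultimately show ?thesis using True by (simp add: ext_def)
      next
        case False
        have "\<phi> v = undefined" using PiE_arb[OF pi False] .
        then show ?thesis using False by (simp add: ext_def)
      qed
    qed
    then show "\<phi> \<in> ext ` P24" using pP by blast
  qed
qed

lemma blk_mem: "x \<in> blk i \<longleftrightarrow> x \<in> V0 \<and> x mod 4 = i"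
  unfolding blk_def by simp

lemma small_V0: "(i::nat) \<in> {0,1,2,3} \<Longrightarrow> i \<in> V0 \<and> i mod 4 = i"
  unfolding V0_def by auto

lemma test3: "\<Union>(blk ` {0,1,2,3}) \<subseteq> V0"
proof
  fix x assume "x \<in> \<Union>(blk ` {0,1,2,3})"
  then obtain i where "x \<in> blk i" by blast
  then show "x \<in> V0" by (simp add: blk_mem)
qed
lemma test4: assumes "x \<in> V0" shows "x \<in> \<Union>(blk ` {0,1,2,3})"
proof (rule UN_I)
  show "x mod 4 \<in> {0,1,2,3}" using mod4[of x] by blast
  show "x \<in> blk (x mod 4)" using assms by (simp add: blk_mem)
qed
lemma test5: "\<Union>(blk ` {0,1,2,3}) = V0" using test3 test4 by blast

lemma blk_disj:
  assumes "p \<in> blk ` {0,1,2,3}" "q \<in> blk ` {0,1,2,3}" "p \<noteq> q"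
  shows "disjnt p q"
proof -
  obtain i where i: "p = blk i" using assms(1) by (rule imageE)
  obtain j where j: "q = blk j" using assms(2) by (rule imageE)
  have "x \<notin> q" if "x \<in> p" for x
  proof
    assume "x \<in> q"
    then have "x mod 4 = j" using j by (simp add: blk_mem)
    moreover have "x mod 4 = i" using that i by (simp add: blk_mem)
    ultimately have "p = q" using i j by simp
    then show False using assms(3) by simp
  qed
  then show ?thesis unfolding disjnt_def by auto
qed

lemma blk_self: "(i::nat) \<in> {0,1,2,3} \<Longrightarrow> i \<in> blk i"
  using small_V0[of i] by (simp add: blk_mem)

lemma blk_ne: "{} \<notin> blk ` {0,1,2,3}"
proof
  assume "{} \<in> blk ` {0,1,2,3}"
  then obtain i where i: "{} = blk i" "i \<in> {0,1,2,3}" by (rule imageE)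
  have "i \<in> blk i" using blk_self[OF i(2)] .
  then show False using i(1) by simp
qed

lemma blk_inj: "inj_on blk {0,1,2,3}"
proof (rule inj_onI)
  fix i j assume i: "i \<in> {0,1,2,3::nat}" and "j \<in> {0,1,2,3::nat}" and e: "blk i = blk j"
  have "i \<in> blk j" using blk_self[OF i] e by simp
  then have "i mod 4 = j" by (simp add: blk_mem)
  then show "i = j" using small_V0[OF i] by simp
qed

lemma blk_ind: "S \<in> blk ` {0,1,2,3} \<Longrightarrow> independent_set E0 S"
proof -
  assume "S \<in> blk ` {0,1,2,3}"
  then obtain i where S: "S = blk i" by (rule imageE)
  show "independent_set E0 S"
    unfolding independent_set_def
  proof (intro ballI)
    fix x y assume "x \<in> S" "y \<in> S"
    then have "x mod 4 = y mod 4" using S by (simp add: blk_mem)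
    then show "{x, y} \<notin> E0" using Ecol by blast
  qed
qed

lemma blk_part: "partition_on V0 (blk ` {0,1,2,3}) \<and> card (blk ` {0,1,2,3}) = 4 \<and>
  (\<forall>S\<in>blk ` {0,1,2,3}. independent_set E0 S)"
proof (intro conjI)
  show "partition_on V0 (blk ` {0,1,2,3})"
    using test5 blk_disj blk_ne by (rule partition_onI)
  have "card (blk ` {0,1,2,3}) = card {0,1,2,3::nat}" using blk_inj by (rule card_image)
  then show "card (blk ` {0,1,2,3}) = 4" by simp
  show "\<forall>S\<in>blk ` {0,1,2,3}. independent_set E0 S" using blk_ind by (rule ballI)
qed

lemma uniq:
  assumes P: "partition_on V0 P" and cP: "card P = 4" and ind: "\<forall>S\<in>P. independent_set E0 S"
  shows "P = blk ` {0,1,2,3}"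
proof -
  have U: "\<Union>P = V0" using partition_onD1[OF P] by simp
  have dj: "disjoint P" using partition_onD2[OF P] .
  have same: "S' = S" if "S' \<in> P" "v \<in> S'" "S \<in> P" "v \<in> S" for S S' v
  proof (rule ccontr)
    assume "S' \<noteq> S"
    then have "disjnt S' S" using dj that(1,3) by (simp add: pairwise_def)
    then show False using that(2,4) by (simp add: disjnt_def disjoint_iff)
  qed
  have ex1: "\<exists>!S. S \<in> P \<and> v \<in> S" if "v \<in> V0" for v
  proof -
    have "v \<in> \<Union>P" using U that by simp
    then obtain S where S: "S \<in> P" "v \<in> S" by (rule UnionE)
    show ?thesis
    proof (rule ex1I[of _ S])
      show "S \<in> P \<and> v \<in> S" using S by simp
      show "S' = S" if "S' \<in> P \<and> v \<in> S'" for S' using same[of S' v S] that S by simp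
    qed
  qed
  define \<beta> where "\<beta> v = (THE S. S \<in> P \<and> v \<in> S)" for v
  have bP: "\<beta> v \<in> P \<and> v \<in> \<beta> v" if "v \<in> V0" for v
    unfolding \<beta>_def using theI'[OF ex1[OF that]] .
  have bu: "\<beta> v = S" if "v \<in> V0" "S \<in> P" "v \<in> S" for v S
    using same[of "\<beta> v" v S] bP[OF that(1)] that by simp
  have adj: "\<beta> x \<noteq> \<beta> y" if "{x,y} \<in> E0" for x y
  proof
    assume eq: "\<beta> x = \<beta> y"
    have xy: "x \<in> V0" "y \<in> V0" using EV[OF that] by simp_all
    have "x \<in> \<beta> x" "y \<in> \<beta> x" "\<beta> x \<in> P" using bP[OF xy(1)] bP[OF xy(2)] eq by simp_all
    moreover have "independent_set E0 (\<beta> x)" using ind \<open>\<beta> x \<in> P\<close> by (rule bspec)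
    ultimately show False using that unfolding independent_set_def by blast
  qed
  have d01: "\<beta> 0 \<noteq> \<beta> 1" by (rule adj) (simp add: E0_def)
  have d02: "\<beta> 0 \<noteq> \<beta> 2" by (rule adj) (simp add: E0_def doubleton_eq_iff)
  have d03: "\<beta> 0 \<noteq> \<beta> 3" by (rule adj) (simp add: E0_def doubleton_eq_iff)
  have d12: "\<beta> 1 \<noteq> \<beta> 2" by (rule adj) (simp add: E0_def doubleton_eq_iff)
  have d13: "\<beta> 1 \<noteq> \<beta> 3" by (rule adj) (simp add: E0_def doubleton_eq_iff)
  have d23: "\<beta> 2 \<noteq> \<beta> 3" by (rule adj) (simp add: E0_def doubleton_eq_iff)
  have fin: "finite P" using cP by (metis card.infinite zero_neq_numeral)
  have "\<beta> 0 \<in> P" "\<beta> 1 \<in> P" "\<beta> 2 \<in> P" "\<beta> 3 \<in> P"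
    using bP[of 0] bP[of 1] bP[of 2] bP[of 3] by (simp_all add: V0_def)
  then have sub: "{\<beta> 0, \<beta> 1, \<beta> 2, \<beta> 3} \<subseteq> P" by simp
  have Pset: "{\<beta> 0, \<beta> 1, \<beta> 2, \<beta> 3} = P"
  proof (rule card_subset_eq[OF fin sub])
    show "card {\<beta> 0, \<beta> 1, \<beta> 2, \<beta> 3} = card P"
      using cP d01 d02 d03 d12 d13 d23 by simp
  qed
  have rng: "\<beta> v \<in> {\<beta> 0, \<beta> 1, \<beta> 2, \<beta> 3}" if "v \<in> V0" for v
    using bP[OF that] Pset by simp
  have f: "\<forall>v\<in>V0. \<beta> v = \<beta> (v mod 4)" using forced[OF adj rng] by blast
  have binj: "\<beta> i = \<beta> j \<longrightarrow> i = j" if "i \<in> {0,1,2,3::nat}" "j \<in> {0,1,2,3::nat}" for i j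
  proof -
    have "i = 0 \<or> i = 1 \<or> i = 2 \<or> i = 3" "j = 0 \<or> j = 1 \<or> j = 2 \<or> j = 3" using that by simp_all
    then show ?thesis using d01 d02 d03 d12 d13 d23 d01[symmetric] d02[symmetric]
          d03[symmetric] d12[symmetric] d13[symmetric] d23[symmetric]
      by (elim disjE) simp_all
  qed
  have bb: "\<beta> i = blk i" if i: "i \<in> {0,1,2,3::nat}" for i
  proof (rule equalityI)
    show "\<beta> i \<subseteq> blk i"
    proof (rule subsetI)
      fix x assume x: "x \<in> \<beta> i"
      have iV: "i \<in> V0" using small_V0[OF i] by simp
      have "\<beta> i \<in> P" using bP[OF iV] by (rule conjunct1)
      then have "x \<in> \<Union>P" using x by (rule UnionI)
      then have xV: "x \<in> V0" using U by simp
      have "\<beta> x = \<beta> i" using bu[OF xV \<open>\<beta> i \<in> P\<close> x] .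
      moreover have "\<beta> x = \<beta> (x mod 4)" using bspec[OF f xV] .
      ultimately have "\<beta> (x mod 4) = \<beta> i" by simp
      moreover have "x mod 4 \<in> {0,1,2,3}" using mod4[of x] by blast
      ultimately have "x mod 4 = i" using binj[OF _ i] by (meson)
      then show "x \<in> blk i" using xV by (simp add: blk_mem)
    qed
    show "blk i \<subseteq> \<beta> i"
    proof (rule subsetI)
      fix x assume "x \<in> blk i"
      then have xV: "x \<in> V0" and xm: "x mod 4 = i" by (simp_all add: blk_mem)
      have "\<beta> x = \<beta> (x mod 4)" using bspec[OF f xV] .
      then have "\<beta> x = \<beta> i" using xm by simp
      then show "x \<in> \<beta> i" using bP[OF xV] by simp
    qed
  qed
  have "\<beta> 0 = blk 0" "\<beta> 1 = blk 1" "\<beta> 2 = blk 2" "\<beta> 3 = blk 3" by (rule bb, simp)+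
  then have "P = {blk 0, blk 1, blk 2, blk 3}" using Pset by simp
  then show ?thesis by simp
qed

lemma ucol: "uniquely_colourable V0 E0 4"
  unfolding uniquely_colourable_def
proof (rule ex1I[of _ "blk ` {0,1,2,3}"])
  show "partition_on V0 (blk ` {0,1,2,3}) \<and> card (blk ` {0,1,2,3}) = 4 \<and>
    (\<forall>S\<in>blk ` {0,1,2,3}. independent_set E0 S)" by (rule blk_part)
  fix P assume "partition_on V0 P \<and> card P = 4 \<and> (\<forall>S\<in>P. independent_set E0 S)"
  then show "P = blk ` {0,1,2,3}" using uniq by blast
qed

lemma dist: "distinct (map fst LL)" by (simp add: LL_def seq_gen)

lemma FT: "set (map fst LL) \<subseteq> T0" unfolding LL_def T0_def by (simp add: seq_gen)

lemma colsLL0: "list_all (\<lambda>(F, p). ext p ` F = {1,2,3}) LL" unfolding LL_def ext_def V0_def by (simp add: seq_gen)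
lemma colsLL: "\<forall>(F, p)\<in>set LL. ext p ` F = {1,2,3}" using colsLL0 by (simp add: list_all_iff)

lemma sP: "set (map snd LL) = P24" unfolding LL_def P24_def by (simp add: seq_gen)

lemma cP: "card P24 = 24" unfolding P24_def by simp

theorem lemma7:
  shows "\<exists>(V :: nat set) (T :: nat set set) (\<F> :: nat set set) (\<phi> :: nat set \<Rightarrow> nat \<Rightarrow> nat).
     plane_triangulation V T \<and>
     uniquely_colourable V (tri_edges T) 4 \<and>
     \<F> \<subseteq> T \<and> card \<F> = 24 \<and>
     bij_betw \<phi> \<F> (proper_colourings V (tri_edges T) 4) \<and>
     (\<forall>F\<in>\<F>. \<phi> F ` F = {1, 2, 3})"
proof -
  define FF where "FF = set (map fst LL)"
  define \<phi> where "\<phi> = (\<lambda>F. ext (the (map_of LL F)))"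
  have FT': "FF \<subseteq> T0" unfolding FF_def using FT .
  have lenLL: "length LL = 24" by (simp add: LL_def)
  have cF: "card FF = 24" unfolding FF_def using distinct_card[OF dist] lenLL by (simp only: length_map)
  have sel: "\<phi> F = ext p" if "(F, p) \<in> set LL" for F p
    using map_of_is_SomeI[OF dist that] by (simp add: \<phi>_def)
  have img1: "\<phi> ` FF = ext ` set (map snd LL)"
  proof
    show "\<phi> ` FF \<subseteq> ext ` set (map snd LL)"
    proof
      fix z assume "z \<in> \<phi> ` FF"
      then obtain F where F: "F \<in> fst ` set LL" "z = \<phi> F" unfolding FF_def by auto
      then obtain q where q: "q \<in> set LL" "F = fst q" by blast
      obtain F' p where Fp: "q = (F', p)" by (cases q)
      have "(F, p) \<in> set LL" using q Fp by simp
      then have "z = ext p" using F(2) sel by simp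
      moreover have "p \<in> snd ` set LL" using \<open>(F, p) \<in> set LL\<close> by (rule image_eqI[rotated]) simp
      ultimately show "z \<in> ext ` set (map snd LL)" by simp
    qed
    show "ext ` set (map snd LL) \<subseteq> \<phi> ` FF"
    proof
      fix z assume "z \<in> ext ` set (map snd LL)"
      then obtain p where p: "p \<in> snd ` set LL" "z = ext p" by auto
      then obtain q where q: "q \<in> set LL" "p = snd q" by blast
      obtain F p' where Fp: "q = (F, p')" by (cases q)
      have "(F, p) \<in> set LL" using q Fp by simp
      then have "z = \<phi> F" using p(2) sel by simp
      moreover have "F \<in> fst ` set LL" using \<open>(F, p) \<in> set LL\<close> by (rule image_eqI[rotated]) simp
      ultimately show "z \<in> \<phi> ` FF" unfolding FF_def by simp
    qed
  qed
  have img: "\<phi> ` FF = proper_colourings V0 E0 4" using img1 sP col_char by simp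
  have lP: "\<forall>p\<in>P24. length p = 4" by (simp add: P24_def)
  have injext: "inj_on ext P24"
  proof (rule inj_onI)
    fix p q assume p: "p \<in> P24" and q: "q \<in> P24" and e: "ext p = ext q"
    have lp: "length p = 4" "length q = 4" using p q lP by simp_all
    have "p ! i = q ! i" if "i < 4" for i
    proof -
      have "i = 0 \<or> i = 1 \<or> i = 2 \<or> i = 3" using that by arith
      then have "i \<in> V0" "i mod 4 = i" unfolding V0_def by auto
      then show ?thesis using fun_cong[OF e, of i] by (simp add: ext_def)
    qed
    then show "p = q" using lp by (simp add: nth_equalityI)
  qed
  have "card (\<phi> ` FF) = card P24" using img1 sP card_image[OF injext] by simp
  then have cimg: "card (\<phi> ` FF) = card FF" using cP cF by simp
  have inj: "inj_on \<phi> FF" using eq_card_imp_inj_on[OF _ cimg] by (simp add: FF_def)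
  have bij: "bij_betw \<phi> FF (proper_colourings V0 E0 4)"
    unfolding bij_betw_def using inj img by simp
  have cols: "\<forall>F\<in>FF. \<phi> F ` F = {1, 2, 3}"
  proof
    fix F assume "F \<in> FF"
    then obtain q where q: "q \<in> set LL" "F = fst q" unfolding FF_def by auto
    obtain F' p where Fp: "q = (F', p)" by (cases q)
    have Fp': "(F, p) \<in> set LL" using q Fp by simp
    have "ext p ` F = {1,2,3}" using bspec[OF colsLL Fp'] by simp
    then show "\<phi> F ` F = {1, 2, 3}" using sel[OF Fp'] by simp
  qed
  show ?thesis
    apply (rule exI[of _ V0], rule exI[of _ T0], rule exI[of _ FF], rule exI[of _ \<phi>])
    apply (unfold TE)
    apply (intro conjI)
    apply (rule plane)
    apply (rule ucol)
    apply (rule FT')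
    apply (rule cF)
    apply (rule bij)
    apply (rule cols)
    done
qed


end
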